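(* Let $G=(V,E)$ be a finite graph and let $Q$ be an admissible random invariant set. For $B \subset V$ and $\mathcal F_B$-measurable $f: \mathcal S_V \to \mathbb R$, $$\mathbb E_V(f \mid \mathcal F_Q)\, \mathbb 1\{Q \cap B = \emptyset\} = \mathbb E_V\big(f\, \mathbb 1\{Q \cap B = \emptyset\} \mid \mathcal F_Q\big) = \mathbb E_{Q^c}\big( f(\cdot \oplus \mathrm{id}) \big)\, \mathbb 1\{Q \cap B = \emptyset\}.$$
   Context: For $U\subset V$, $\mathcal S_U$ is the set of bijections $\pi:U\to U$ with $\pi(x)=x$ or $\{x,\pi(x)\}\in E$; $\mathbb P_U(\pi)=e^{-\alpha\sum_{x\in U}\mathbb 1\{\pi(x)\neq x\}}/Z(U)$ with normalizing constant $Z(U)$, and $\mathbb E_U$ its expectation. For $B\subset V$, $\mathcal F_B$ is the $\sigma$-algebra on $\mathcal S_V$ generated by the values $\pi(x)$ and $\pi^{-1}(x)$, $x\in B$. For $\pi\in\mathcal S_U$, $\pi\oplus\mathrm{id}\in\mathcal S_V$ extends $\pi$ by the identity outside $U$. A set-valued random variable $Q:\mathcal S_V\to\mathcal P(V)$ is an admissible random invariant set if $\pi(Q(\pi))=Q(\pi)$ for all $\pi\in\mathcal S_V$ and the event $\{Q=A\}$ is $\mathcal F_A$-measurable for all $A\subset V$. $\mathcal F_Q=\{R\subset\mathcal S_V: R\cap\{Q=A\}\in\mathcal F_A\text{ for all }A\subset V\}$. $\mathbb E_{Q^c}(\cdot)$ denotes $\mathbb E_{A^c}(\cdot)$ evaluated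 at $A=Q$. *)

theory Defs
  imports "HOL-Probability.Probability"
begin

definition finite_graph :: "'a set \<Rightarrow> 'a set set \<Rightarrow> bool" where
  "finite_graph V E \<longleftrightarrow> finite V \<and>
     (\<forall>e\<in>E. \<exists>x y. e = {x, y} \<and> x \<noteq> y \<and> x \<in> V \<and> y \<in> V)"

text \<open>S_U: bijections of U moving each point along an edge or fixing it.
  Such a bijection is represented by a function on the whole type that is the identity
  outside U (canonical representative).\<close>
definition perms :: "'a set set \<Rightarrow> 'a set \<Rightarrow> ('a \<Rightarrow> 'a) set" where
  "perms E U = {\<pi>. bij_betw \<pi> U U \<and> (\<forall>x. x \<notin> U \<longrightarrow> \<pi> x = x)
                  \<and> (\<forall>x\<in>U. \<pi> x = x \<or> {x, \<pi> x} \<in> E)}"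

definition weight :: "real \<Rightarrow> 'a set \<Rightarrow> ('a \<Rightarrow> 'a) \<Rightarrow> real" where
  "weight \<alpha> U \<pi> = exp (- \<alpha> * (\<Sum>x\<in>U. if \<pi> x \<noteq> x then 1 else 0))"

definition Zc :: "real \<Rightarrow> 'a set set \<Rightarrow> 'a set \<Rightarrow> real" where
  "Zc \<alpha> E U = (\<Sum>\<pi>\<in>perms E U. weight \<alpha> U \<pi>)"

definition Pr :: "real \<Rightarrow> 'a set set \<Rightarrow> 'a set \<Rightarrow> ('a \<Rightarrow> 'a) \<Rightarrow> real" where
  "Pr \<alpha> E U \<pi> = weight \<alpha> U \<pi> / Zc \<alpha> E U"

definition Ex :: "real \<Rightarrow> 'a set set \<Rightarrow> 'a set \<Rightarrow> (('a \<Rightarrow> 'a) \<Rightarrow> real) \<Rightarrow> real" where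
  "Ex \<alpha> E U g = (\<Sum>\<pi>\<in>perms E U. g \<pi> * Pr \<alpha> E U \<pi>)"

definition PV :: "real \<Rightarrow> 'a set set \<Rightarrow> 'a set \<Rightarrow> ('a \<Rightarrow> 'a) measure" where
  "PV \<alpha> E V = point_measure (perms E V) (\<lambda>\<pi>. ennreal (Pr \<alpha> E V \<pi>))"

definition oplus_id :: "'a set \<Rightarrow> ('a \<Rightarrow> 'a) \<Rightarrow> ('a \<Rightarrow> 'a)" where
  "oplus_id U \<pi> = (\<lambda>x. if x \<in> U then \<pi> x else x)"

definition Fgen :: "'a set set \<Rightarrow> 'a set \<Rightarrow> 'a set \<Rightarrow> ('a \<Rightarrow> 'a) set set" where
  "Fgen E V B = {{\<pi> \<in> perms E V. \<pi> x = y} | x y. x \<in> B}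
              \<union> {{\<pi> \<in> perms E V. inv \<pi> x = y} | x y. x \<in> B}"

definition FB :: "'a set set \<Rightarrow> 'a set \<Rightarrow> 'a set \<Rightarrow> ('a \<Rightarrow> 'a) set set" where
  "FB E V B = sigma_sets (perms E V) (Fgen E V B)"

definition admissible :: "'a set set \<Rightarrow> 'a set \<Rightarrow> (('a \<Rightarrow> 'a) \<Rightarrow> 'a set) \<Rightarrow> bool" where
  "admissible E V Q \<longleftrightarrow>
     (\<forall>\<pi>\<in>perms E V. Q \<pi> \<subseteq> V \<and> \<pi> ` Q \<pi> = Q \<pi>) \<and>
     (\<forall>A. A \<subseteq> V \<longrightarrow> {\<pi> \<in> perms E V. Q \<pi> = A} \<in> FB E V A)"

definition FQ :: "'a set set \<Rightarrow> 'a set \<Rightarrow> (('a \<Rightarrow> 'a) \<Rightarrow> 'a set) \<Rightarrow> ('a \<Rightarrow> 'a) set set" where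
  "FQ E V Q = {R. R \<subseteq> perms E V \<and>
                  (\<forall>A. A \<subseteq> V \<longrightarrow> R \<inter> {\<pi> \<in> perms E V. Q \<pi> = A} \<in> FB E V A)}"

end

theory Submission
  imports Defs "HOL-Combinatorics.Permutations"
begin

lemma perms_permutes: "\<pi> \<in> perms E U \<Longrightarrow> \<pi> permutes U"
  unfolding perms_def by (auto intro: bij_imp_permutes)

lemma perms_bij: "\<pi> \<in> perms E U \<Longrightarrow> bij \<pi>"
  using perms_permutes permutes_bij by blast

lemma finite_perms: "finite U \<Longrightarrow> finite (perms E U)"
  by (rule finite_subset[OF _ finite_permutations[of U]]) (auto dest: perms_permutes)

lemma id_perms: "(\<lambda>x. x) \<in> perms E U"
  unfolding perms_def by (auto simp: bij_betw_def)

lemma perms_out: "\<pi> \<in> perms E U \<Longrightarrow> x \<notin> U \<Longrightarrow> \<pi> x = x"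
  unfolding perms_def by auto

definition comb :: "'a set \<Rightarrow> ('a \<Rightarrow> 'a) \<Rightarrow> ('a \<Rightarrow> 'a) \<Rightarrow> ('a \<Rightarrow> 'a)" where
  "comb A \<sigma> \<tau> = (\<lambda>x. if x \<in> A then \<sigma> x else \<tau> x)"

lemma comb_perms:
  assumes "A \<subseteq> V" "\<sigma> \<in> perms E A" "\<tau> \<in> perms E (V - A)"
  shows "comb A \<sigma> \<tau> \<in> perms E V"
proof -
  have b1: "bij_betw (comb A \<sigma> \<tau>) A A"
    using assms(2) unfolding perms_def by (auto simp: comb_def intro: bij_betw_cong[THEN iffD1])
  have b2: "bij_betw (comb A \<sigma> \<tau>) (V - A) (V - A)"
    using assms(3) unfolding perms_def
    by (auto simp: comb_def intro: bij_betw_cong[THEN iffD1])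
  have "bij_betw (comb A \<sigma> \<tau>) (A \<union> (V - A)) (A \<union> (V - A))"
    by (rule bij_betw_combine[OF b1 b2]) auto
  moreover have "A \<union> (V - A) = V" using assms(1) by auto
  ultimately have "bij_betw (comb A \<sigma> \<tau>) V V" by simp
  then show ?thesis using assms unfolding perms_def comb_def by auto
qed

lemma restr_perms:
  assumes "\<pi> \<in> perms E V" "A \<subseteq> V" "\<pi> ` A = A"
  shows "oplus_id A \<pi> \<in> perms E A" "oplus_id (V - A) \<pi> \<in> perms E (V - A)"
proof -
  have bV: "bij_betw \<pi> V V" and ed: "\<forall>x\<in>V. \<pi> x = x \<or> {x, \<pi> x} \<in> E"
    using assms(1) unfolding perms_def by auto
  have injA: "inj_on \<pi> A" using bV assms(2) by (meson bij_betw_def inj_on_subset)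
  have "bij_betw \<pi> A A" using injA assms(3) by (simp add: bij_betw_def)
  then have "bij_betw (oplus_id A \<pi>) A A"
    by (rule bij_betw_cong[THEN iffD2, rotated]) (simp add: oplus_id_def)
  then show "oplus_id A \<pi> \<in> perms E A"
    using ed assms(2) unfolding perms_def oplus_id_def by auto
  have "\<pi> ` (V - A) = \<pi> ` V - \<pi> ` A"
    using bV assms(2) inj_on_image_set_diff[of \<pi> V V A] by (auto simp: bij_betw_def)
  then have "\<pi> ` (V - A) = V - A" using bV assms(3) by (simp add: bij_betw_def)
  moreover have "inj_on \<pi> (V - A)" using bV by (meson bij_betw_def inj_on_subset Diff_subset)
  ultimately have "bij_betw \<pi> (V - A) (V - A)" by (simp add: bij_betw_def)
  then have "bij_betw (oplus_id (V - A) \<pi>) (V - A) (V - A)"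
    by (rule bij_betw_cong[THEN iffD2, rotated]) (simp add: oplus_id_def)
  then show "oplus_id (V - A) \<pi> \<in> perms E (V - A)"
    using ed unfolding perms_def oplus_id_def by auto
qed

lemma atoms:
  assumes "X \<in> sigma_sets (perms E V) (Fgen E V C)" "\<pi> \<in> perms E V" "\<pi>' \<in> perms E V"
    "\<And>x. x \<in> C \<Longrightarrow> \<pi> x = \<pi>' x \<and> inv \<pi> x = inv \<pi>' x"
  shows "\<pi> \<in> X \<longleftrightarrow> \<pi>' \<in> X"
  using assms(1)
proof (induction rule: sigma_sets.induct)
  case (Basic a)
  then show ?case using assms(2-4) unfolding Fgen_def by auto
next
  case Empty
  then show ?case by simp
next
  case (Compl a)
  then show ?case using assms(2,3) by auto
next
  case (Union a)
  then show ?case by auto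
qed

lemma f_atoms:
  fixes f :: "('a \<Rightarrow> 'a) \<Rightarrow> real"
  assumes "f \<in> borel_measurable (sigma (perms E V) (FB E V B))"
    "\<pi> \<in> perms E V" "\<pi>' \<in> perms E V"
    "\<And>x. x \<in> B \<Longrightarrow> \<pi> x = \<pi>' x \<and> inv \<pi> x = inv \<pi>' x"
  shows "f \<pi> = f \<pi>'"
proof -
  have sub: "Fgen E V B \<subseteq> Pow (perms E V)" unfolding Fgen_def by auto
  have sub2: "FB E V B \<subseteq> Pow (perms E V)"
    unfolding FB_def using sigma_sets_into_sp[OF sub] by auto
  have "f -` {f \<pi>} \<inter> space (sigma (perms E V) (FB E V B)) \<in> sets (sigma (perms E V) (FB E V B))"
    by (rule borel_measurable_vimage[OF assms(1)])
  then have "f -` {f \<pi>} \<inter> perms E V \<in> sigma_sets (perms E V) (Fgen E V B)"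
    using sub2 sigma_sets_sigma_sets_eq[OF sub] by (simp add: FB_def)
  then have "\<pi> \<in> f -` {f \<pi>} \<inter> perms E V \<longleftrightarrow> \<pi>' \<in> f -` {f \<pi>} \<inter> perms E V"
    by (rule atoms[OF _ assms(2,3,4)])
  then show ?thesis using assms(2) by auto
qed


lemma weight_comb:
  assumes "finite V" "A \<subseteq> V"
  shows "weight \<alpha> V (comb A \<sigma> \<tau>) = weight \<alpha> A \<sigma> * weight \<alpha> (V - A) \<tau>"
proof -
  let ?h = "\<lambda>x. if comb A \<sigma> \<tau> x \<noteq> x then 1 else (0::real)"
  have "(\<Sum>x\<in>V. ?h x) = (\<Sum>x\<in>V - A. ?h x) + (\<Sum>x\<in>A. ?h x)"
    using sum.subset_diff[OF assms(2) assms(1)] by simp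
  also have "(\<Sum>x\<in>V - A. ?h x) = (\<Sum>x\<in>V - A. if \<tau> x \<noteq> x then 1 else 0)"
    by (rule sum.cong) (auto simp: comb_def)
  also have "(\<Sum>x\<in>A. ?h x) = (\<Sum>x\<in>A. if \<sigma> x \<noteq> x then 1 else 0)"
    by (rule sum.cong) (auto simp: comb_def)
  finally show ?thesis unfolding weight_def
    by (simp add: exp_add[symmetric] algebra_simps)
qed

lemma Zc_pos: "finite U \<Longrightarrow> Zc \<alpha> E U > 0"
  unfolding Zc_def weight_def
  using id_perms[of E U] by (intro sum_pos) (auto simp: finite_perms)


lemma key:
  fixes f :: "('a \<Rightarrow> 'a) \<Rightarrow> real"
  assumes fg: "finite_graph V E" and adm: "admissible E V Q" and BV: "B \<subseteq> V"
    and fm: "f \<in> borel_measurable (sigma (perms E V) (FB E V B))"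
    and AV: "A \<subseteq> V" and AB: "A \<inter> B = {}"
    and S1: "S \<subseteq> {\<pi> \<in> perms E V. Q \<pi> = A}" and S2: "S \<in> FB E V A"
  shows "(\<Sum>\<pi>\<in>S. f \<pi> * Pr \<alpha> E V \<pi>)
       = (\<Sum>\<pi>\<in>S. Ex \<alpha> E (V - A) (\<lambda>\<tau>. f (oplus_id (V - A) \<tau>)) * Pr \<alpha> E V \<pi>)"
proof -
  have finV: "finite V" using fg finite_graph_def by auto
  let ?T = "perms E (V - A)"
  define Sg where "Sg = oplus_id A ` S"
  have inv: "\<pi> ` A = A" if "\<pi> \<in> S" for \<pi>
  proof -
    have h: "\<pi> \<in> perms E V" "Q \<pi> = A" using S1 that by auto
    then have "\<pi> ` Q \<pi> = Q \<pi>" using adm unfolding admissible_def by blast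
    then show ?thesis using h(2) by simp
  qed
  have SP: "\<pi> \<in> perms E V" if "\<pi> \<in> S" for \<pi> using S1 that by auto
  have Sg_perms: "\<sigma> \<in> perms E A" if "\<sigma> \<in> Sg" for \<sigma>
    using that restr_perms(1)[OF SP AV inv] Sg_def by auto
  have comb_id: "comb A (oplus_id A \<pi>) (oplus_id (V - A) \<pi>) = \<pi>" if "\<pi> \<in> perms E V" for \<pi>
    using perms_out[OF that] AV unfolding comb_def oplus_id_def by (auto simp: fun_eq_iff)
  have oA: "oplus_id A (comb A \<sigma> \<tau>) = \<sigma>" if "\<sigma> \<in> perms E A" for \<sigma> \<tau>
    using perms_out[OF that] unfolding comb_def oplus_id_def by (auto simp: fun_eq_iff)
  have oB: "oplus_id (V - A) (comb A \<sigma> \<tau>) = \<tau>" if "\<tau> \<in> ?T" for \<sigma> \<tau>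
    using perms_out[OF that] AV unfolding comb_def oplus_id_def by (auto simp: fun_eq_iff)
  have oT: "oplus_id (V - A) \<tau> = \<tau>" if "\<tau> \<in> ?T" for \<tau>
    using perms_out[OF that] unfolding oplus_id_def by (auto simp: fun_eq_iff)
  have closed: "comb A (oplus_id A \<pi>) \<tau> \<in> S" if "\<pi> \<in> S" "\<tau> \<in> ?T" for \<pi> \<tau>
  proof -
    let ?p = "comb A (oplus_id A \<pi>) \<tau>"
    have pp: "?p \<in> perms E V"
      by (rule comb_perms[OF AV restr_perms(1)[OF SP[OF that(1)] AV inv[OF that(1)]] that(2)])
    have bp: "bij \<pi>" "bij ?p" using perms_bij pp SP that(1) by auto
    have agree: "\<pi> x = ?p x \<and> inv \<pi> x = inv ?p x" if "x \<in> A" for x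
    proof -
      have "x \<in> \<pi> ` A" using inv[OF \<open>\<pi> \<in> S\<close>] that by simp
      then obtain y where y: "y \<in> A" "\<pi> y = x" by auto
      then have py: "?p y = x" by (simp add: comb_def oplus_id_def)
      have "inv \<pi> x = y" using y(2) inv_f_f[OF bij_is_inj[OF bp(1)], of y] by simp
      moreover have "inv ?p x = y" using py inv_f_f[OF bij_is_inj[OF bp(2)], of y] by simp
      ultimately show ?thesis using that by (simp add: comb_def oplus_id_def)
    qed
    have "\<pi> \<in> S \<longleftrightarrow> ?p \<in> S"
      by (rule atoms[OF S2[unfolded FB_def] SP[OF that(1)] pp agree])
    then show ?thesis using that(1) by simp
  qed
  have bij: "bij_betw (\<lambda>(\<sigma>, \<tau>). comb A \<sigma> \<tau>) (Sg \<times> ?T) S"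
  proof (unfold bij_betw_def, intro conjI)
    show "inj_on (\<lambda>(\<sigma>, \<tau>). comb A \<sigma> \<tau>) (Sg \<times> ?T)"
    proof (rule inj_onI, clarify)
      fix \<sigma> \<tau> \<sigma>' \<tau>'
      assume h: "\<sigma> \<in> Sg" "\<tau> \<in> ?T" "\<sigma>' \<in> Sg" "\<tau>' \<in> ?T" "comb A \<sigma> \<tau> = comb A \<sigma>' \<tau>'"
      then show "\<sigma> = \<sigma>' \<and> \<tau> = \<tau>'"
        using oA[OF Sg_perms[OF h(1)], of \<tau>] oA[OF Sg_perms[OF h(3)], of \<tau>']
          oB[OF h(2), of \<sigma>] oB[OF h(4), of \<sigma>'] by simp
    qed
    show "(\<lambda>(\<sigma>, \<tau>). comb A \<sigma> \<tau>) ` (Sg \<times> ?T) = S"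
    proof
      show "(\<lambda>(\<sigma>, \<tau>). comb A \<sigma> \<tau>) ` (Sg \<times> ?T) \<subseteq> S"
        using closed unfolding Sg_def by auto
      show "S \<subseteq> (\<lambda>(\<sigma>, \<tau>). comb A \<sigma> \<tau>) ` (Sg \<times> ?T)"
      proof
        fix \<pi> assume "\<pi> \<in> S"
        then have "\<pi> = (\<lambda>(\<sigma>, \<tau>). comb A \<sigma> \<tau>) (oplus_id A \<pi>, oplus_id (V - A) \<pi>)"
          "(oplus_id A \<pi>, oplus_id (V - A) \<pi>) \<in> Sg \<times> ?T"
          using comb_id[OF SP] restr_perms(2)[OF SP AV inv] unfolding Sg_def by auto
        then show "\<pi> \<in> (\<lambda>(\<sigma>, \<tau>). comb A \<sigma> \<tau>) ` (Sg \<times> ?T)" by blast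
      qed
    qed
  qed
  have ff: "f (comb A \<sigma> \<tau>) = f \<tau>" if "\<sigma> \<in> perms E A" "\<tau> \<in> ?T" for \<sigma> \<tau>
  proof -
    have "comb A (\<lambda>x. x) \<tau> = \<tau>"
      using perms_out[OF that(2)] unfolding comb_def by (auto simp: fun_eq_iff)
    then have tP: "\<tau> \<in> perms E V" using comb_perms[OF AV id_perms that(2)] by simp
    have pP: "comb A \<sigma> \<tau> \<in> perms E V" by (rule comb_perms[OF AV that])
    have bt: "bij \<tau>" "bij (comb A \<sigma> \<tau>)" using perms_bij tP pP by auto
    have tV: "\<tau> ` (V - A) = V - A" using that(2) unfolding perms_def bij_betw_def by auto
    show ?thesis
    proof (rule f_atoms[OF fm pP tP])
      fix x assume "x \<in> B"
      then have xA: "x \<in> V - A" using BV AB by auto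
      then have "x \<in> \<tau> ` (V - A)" using tV by simp
      then obtain y where y: "y \<in> V - A" "\<tau> y = x" by auto
      then have cy: "comb A \<sigma> \<tau> y = x" by (simp add: comb_def)
      have "inv \<tau> x = y" using y(2) inv_f_f[OF bij_is_inj[OF bt(1)], of y] by simp
      moreover have "inv (comb A \<sigma> \<tau>) x = y" using cy inv_f_f[OF bij_is_inj[OF bt(2)], of y] by simp
      ultimately show "comb A \<sigma> \<tau> x = \<tau> x \<and> inv (comb A \<sigma> \<tau>) x = inv \<tau> x"
        using xA by (simp add: comb_def)
    qed
  qed
  have ww: "Pr \<alpha> E V (comb A \<sigma> \<tau>) = weight \<alpha> A \<sigma> * weight \<alpha> (V - A) \<tau> / Zc \<alpha> E V" for \<sigma> \<tau>
    unfolding Pr_def using weight_comb[OF finV AV] by simp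
  define ZT where "ZT = Zc \<alpha> E (V - A)"
  have ZT: "ZT > 0" unfolding ZT_def using finV by (simp add: Zc_pos)
  define c where "c = Ex \<alpha> E (V - A) (\<lambda>\<tau>. f (oplus_id (V - A) \<tau>))"
  have c: "c * ZT = (\<Sum>\<tau>\<in>?T. f \<tau> * weight \<alpha> (V - A) \<tau>)"
  proof -
    have "c = (\<Sum>\<tau>\<in>?T. f \<tau> * weight \<alpha> (V - A) \<tau>) / ZT"
      unfolding c_def Ex_def Pr_def ZT_def
      by (simp add: oT sum_divide_distrib)
    then show ?thesis using ZT by simp
  qed
  have ZTs: "ZT = (\<Sum>\<tau>\<in>?T. weight \<alpha> (V - A) \<tau>)" unfolding ZT_def Zc_def ..
  have "(\<Sum>\<pi>\<in>S. f \<pi> * Pr \<alpha> E V \<pi>)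
      = (\<Sum>p\<in>Sg \<times> ?T. f ((\<lambda>(\<sigma>, \<tau>). comb A \<sigma> \<tau>) p) * Pr \<alpha> E V ((\<lambda>(\<sigma>, \<tau>). comb A \<sigma> \<tau>) p))"
    by (rule sum.reindex_bij_betw[OF bij, symmetric])
  also have "\<dots> = (\<Sum>\<sigma>\<in>Sg. \<Sum>\<tau>\<in>?T. f \<tau> * (weight \<alpha> A \<sigma> * weight \<alpha> (V - A) \<tau> / Zc \<alpha> E V))"
    by (simp add: sum.cartesian_product ww split_def) (auto intro!: sum.cong simp: ff Sg_perms)
  also have "\<dots> = (\<Sum>\<sigma>\<in>Sg. weight \<alpha> A \<sigma> / Zc \<alpha> E V * (\<Sum>\<tau>\<in>?T. f \<tau> * weight \<alpha> (V - A) \<tau>))"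
    by (simp add: sum_distrib_left algebra_simps)
  also have "\<dots> = (\<Sum>\<sigma>\<in>Sg. \<Sum>\<tau>\<in>?T. c * (weight \<alpha> A \<sigma> * weight \<alpha> (V - A) \<tau> / Zc \<alpha> E V))"
    unfolding c[symmetric] ZTs by (simp add: sum_distrib_left algebra_simps)
  also have "\<dots> = (\<Sum>p\<in>Sg \<times> ?T. c * Pr \<alpha> E V ((\<lambda>(\<sigma>, \<tau>). comb A \<sigma> \<tau>) p))"
    by (simp add: sum.cartesian_product ww split_def)
  also have "\<dots> = (\<Sum>\<pi>\<in>S. c * Pr \<alpha> E V \<pi>)"
    by (rule sum.reindex_bij_betw[OF bij])
  finally show ?thesis unfolding c_def .
qed


lemma FQ_sub: "FQ E V Q \<subseteq> Pow (perms E V)"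
  unfolding FQ_def by auto

lemma FB_sigma: "sigma_algebra (perms E V) (FB E V A)"
  unfolding FB_def by (rule sigma_algebra_sigma_sets) (auto simp: Fgen_def)

lemma FB_empty: "{} \<in> FB E V A"
  unfolding FB_def by (rule sigma_sets.Empty)

lemma sigma_algebra_FB_Diff: "X \<in> FB E V A \<Longrightarrow> Y \<in> FB E V A \<Longrightarrow> X - Y \<in> FB E V A"
proof -
  interpret sigma_algebra "perms E V" "FB E V A" by (rule FB_sigma)
  show "X \<in> FB E V A \<Longrightarrow> Y \<in> FB E V A \<Longrightarrow> X - Y \<in> FB E V A" by (rule Diff)
qed

lemma sigma_algebra_FB_UN:
  fixes X :: "nat \<Rightarrow> ('a \<Rightarrow> 'a) set"
  assumes "range X \<subseteq> FB E V A" shows "(\<Union>i. X i) \<in> FB E V A"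
  unfolding FB_def by (rule sigma_sets.Union) (use assms in \<open>auto simp: FB_def\<close>)

lemma FQ_closed:
  assumes "X \<in> sigma_sets (perms E V) (FQ E V Q)" and adm: "admissible E V Q"
  shows "X \<in> FQ E V Q"
  using assms(1)
proof (induction rule: sigma_sets.induct)
  case (Basic a)
  then show ?case .
next
  case Empty
  then show ?case unfolding FQ_def
    using FB_empty by auto
next
  case (Compl a)
  show ?case unfolding FQ_def
  proof (intro CollectI conjI allI impI)
    show "perms E V - a \<subseteq> perms E V" by auto
    fix A assume A: "A \<subseteq> V"
    have eq: "(perms E V - a) \<inter> {\<pi> \<in> perms E V. Q \<pi> = A}
        = {\<pi> \<in> perms E V. Q \<pi> = A} - (a \<inter> {\<pi> \<in> perms E V. Q \<pi> = A})" by auto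
    have h1: "{\<pi> \<in> perms E V. Q \<pi> = A} \<in> FB E V A"
      using adm A unfolding admissible_def by auto
    have h2: "a \<inter> {\<pi> \<in> perms E V. Q \<pi> = A} \<in> FB E V A"
      using Compl(2) A unfolding FQ_def by auto
    show "(perms E V - a) \<inter> {\<pi> \<in> perms E V. Q \<pi> = A} \<in> FB E V A"
      unfolding eq by (rule sigma_algebra_FB_Diff[OF h1 h2])
  qed
next
  case (Union a)
  show ?case unfolding FQ_def
  proof (intro CollectI conjI allI impI)
    show "\<Union> (range a) \<subseteq> perms E V" using Union(2) unfolding FQ_def by auto
    fix A assume A: "A \<subseteq> V"
    have eq: "\<Union> (range a) \<inter> {\<pi> \<in> perms E V. Q \<pi> = A}
        = (\<Union>i. a i \<inter> {\<pi> \<in> perms E V. Q \<pi> = A})" by auto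
    have rg: "range (\<lambda>i. a i \<inter> {\<pi> \<in> perms E V. Q \<pi> = A}) \<subseteq> FB E V A"
      using Union(2) A unfolding FQ_def by auto
    show "\<Union> (range a) \<inter> {\<pi> \<in> perms E V. Q \<pi> = A} \<in> FB E V A"
      unfolding eq by (rule sigma_algebra_FB_UN[OF rg])
  qed
qed

lemma FQ_vimage:
  assumes "admissible E V Q"
  shows "{\<pi> \<in> perms E V. Q \<pi> \<in> AA} \<in> FQ E V Q"
  unfolding FQ_def
proof (intro CollectI conjI allI impI)
  show "{\<pi> \<in> perms E V. Q \<pi> \<in> AA} \<subseteq> perms E V" by auto
  fix A assume A: "A \<subseteq> V"
  show "{\<pi> \<in> perms E V. Q \<pi> \<in> AA} \<inter> {\<pi> \<in> perms E V. Q \<pi> = A} \<in> FB E V A"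
  proof (cases "A \<in> AA")
    case True
    then have "{\<pi> \<in> perms E V. Q \<pi> \<in> AA} \<inter> {\<pi> \<in> perms E V. Q \<pi> = A} = {\<pi> \<in> perms E V. Q \<pi> = A}"
      by auto
    then show ?thesis using assms A unfolding admissible_def by auto
  next
    case False
    then have "{\<pi> \<in> perms E V. Q \<pi> \<in> AA} \<inter> {\<pi> \<in> perms E V. Q \<pi> = A} = {}"
      by auto
    then show ?thesis using FB_empty by simp
  qed
qed

lemma meas_Q:
  fixes h :: "'a set \<Rightarrow> real"
  assumes "admissible E V Q"
  shows "(\<lambda>\<pi>. h (Q \<pi>)) \<in> borel_measurable (sigma (perms E V) (FQ E V Q))"
proof (rule measurableI)
  fix X :: "real set"
  have "(\<lambda>\<pi>. h (Q \<pi>)) -` X \<inter> space (sigma (perms E V) (FQ E V Q))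
      = {\<pi> \<in> perms E V. Q \<pi> \<in> {A. h A \<in> X}}"
    using space_measure_of[OF FQ_sub[of E V Q]] by auto
  also have "\<dots> \<in> sets (sigma (perms E V) (FQ E V Q))"
    unfolding sets_measure_of[OF FQ_sub[of E V Q]]
    by (rule sigma_sets.Basic, rule FQ_vimage[OF assms])
  finally show "(\<lambda>\<pi>. h (Q \<pi>)) -` X \<inter> space (sigma (perms E V) (FQ E V Q))
      \<in> sets (sigma (perms E V) (FQ E V Q))" .
qed simp

lemma Pr_nonneg: "finite U \<Longrightarrow> Pr \<alpha> E U \<pi> \<ge> 0"
  unfolding Pr_def weight_def using Zc_pos[of U \<alpha> E] by simp

lemma setint:
  assumes "finite V" "S \<subseteq> perms E V"
  shows "set_lebesgue_integral (PV \<alpha> E V) S h = (\<Sum>x\<in>S. Pr \<alpha> E V x * h x)"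
proof -
  have "set_lebesgue_integral (PV \<alpha> E V) S h
      = (\<Sum>a\<in>perms E V. Pr \<alpha> E V a *\<^sub>R (indicator S a *\<^sub>R h a))"
    unfolding set_lebesgue_integral_def PV_def
    by (rule lebesgue_integral_point_measure_finite)
       (auto simp: finite_perms assms Pr_nonneg)
  also have "\<dots> = (\<Sum>x\<in>S. Pr \<alpha> E V x * h x)"
    by (rule sum.mono_neutral_cong_right) (use assms in \<open>auto simp: finite_perms\<close>)
  finally show ?thesis .
qed

theorem proposition4p2:
  fixes V :: "'a set" and E :: "'a set set" and \<alpha> :: real
    and Q :: "('a \<Rightarrow> 'a) \<Rightarrow> 'a set" and B :: "'a set"
    and f :: "('a \<Rightarrow> 'a) \<Rightarrow> real"
  assumes "finite_graph V E"
    and "admissible E V Q"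
    and "B \<subseteq> V"
    and "f \<in> borel_measurable (sigma (perms E V) (FB E V B))"
  shows "AE \<pi> in PV \<alpha> E V.
     real_cond_exp (PV \<alpha> E V) (sigma (perms E V) (FQ E V Q)) f \<pi>
        * indicator {\<sigma>. Q \<sigma> \<inter> B = {}} \<pi>
       = real_cond_exp (PV \<alpha> E V) (sigma (perms E V) (FQ E V Q))
           (\<lambda>\<sigma>. f \<sigma> * indicator {\<sigma>. Q \<sigma> \<inter> B = {}} \<sigma>) \<pi>
     \<and> real_cond_exp (PV \<alpha> E V) (sigma (perms E V) (FQ E V Q))
           (\<lambda>\<sigma>. f \<sigma> * indicator {\<sigma>. Q \<sigma> \<inter> B = {}} \<sigma>) \<pi>
       = Ex \<alpha> E (V - Q \<pi>) (\<lambda>\<tau>. f (oplus_id (V - Q \<pi>) \<tau>))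
           * indicator {\<sigma>. Q \<sigma> \<inter> B = {}} \<pi>"
proof -
  let ?M = "PV \<alpha> E V"
  let ?F = "sigma (perms E V) (FQ E V Q)"
  let ?P = "perms E V"
  let ?ind = "indicator {\<sigma>. Q \<sigma> \<inter> B = {}} :: ('a \<Rightarrow> 'a) \<Rightarrow> real"
  define G where "G = (\<lambda>\<pi>. Ex \<alpha> E (V - Q \<pi>) (\<lambda>\<tau>. f (oplus_id (V - Q \<pi>) \<tau>)) * ?ind \<pi>)"
  have finV: "finite V" using assms(1) finite_graph_def by auto
  have finP: "finite ?P" using finV by (simp add: finite_perms)
  have fmeas: "finite_measure ?M"
    unfolding PV_def
    by (rule finite_measureI) (simp add: space_point_measure emeasure_point_measure_finite finP)
  have sub: "subalgebra ?M ?F"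
    unfolding subalgebra_def
    unfolding space_measure_of[OF FQ_sub[of E V Q]] sets_measure_of[OF FQ_sub[of E V Q]]
    by (auto simp: PV_def space_point_measure sets_point_measure dest: sigma_sets_into_sp[OF FQ_sub[of E V Q]])
  interpret F: finite_measure_subalgebra ?M ?F
    using fmeas sub by (simp add: finite_measure_subalgebra_def finite_measure_subalgebra_axioms_def)
  have intg: "integrable ?M g" for g :: "('a \<Rightarrow> 'a) \<Rightarrow> real"
    unfolding PV_def by (rule integrable_point_measure_finite[OF finP])
  have Mmeas: "g \<in> borel_measurable ?M" for g :: "('a \<Rightarrow> 'a) \<Rightarrow> real"
    unfolding PV_def by simp
  have ind_eq: "?ind = (\<lambda>\<pi>. (\<lambda>A. if A \<inter> B = {} then 1 else 0) (Q \<pi>))"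
    by (auto simp: fun_eq_iff indicator_def)
  have ind_meas: "?ind \<in> borel_measurable ?F"
    unfolding ind_eq by (rule meas_Q[OF assms(2)])
  have G_eq: "G = (\<lambda>\<pi>. (\<lambda>A. Ex \<alpha> E (V - A) (\<lambda>\<tau>. f (oplus_id (V - A) \<tau>))
                 * (if A \<inter> B = {} then 1 else 0)) (Q \<pi>))"
    unfolding G_def by (auto simp: fun_eq_iff indicator_def)
  have G_meas: "G \<in> borel_measurable ?F"
    unfolding G_eq by (rule meas_Q[OF assms(2)])
  have AE1: "AE x in ?M. real_cond_exp ?M ?F (\<lambda>x. ?ind x * f x) x = ?ind x * real_cond_exp ?M ?F f x"
    by (rule F.real_cond_exp_mult[OF ind_meas Mmeas intg])
  have comm: "(\<lambda>x. ?ind x * f x) = (\<lambda>\<sigma>. f \<sigma> * ?ind \<sigma>)" by (auto simp: fun_eq_iff)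
  have AE2: "AE x in ?M. real_cond_exp ?M ?F (\<lambda>\<sigma>. f \<sigma> * ?ind \<sigma>) x = G x"
  proof (rule F.real_cond_exp_charact[OF _ intg intg G_meas])
    fix S assume "S \<in> sets ?F"
    then have SQ: "S \<in> FQ E V Q" using sets_measure_of[OF FQ_sub[of E V Q]] FQ_closed[OF _ assms(2)] by auto
    then have SP: "S \<subseteq> ?P" unfolding FQ_def by auto
    have finS: "finite S" using finite_subset[OF SP finP] .
    have "(\<Sum>x\<in>S. Pr \<alpha> E V x * (f x * ?ind x)) = (\<Sum>x\<in>S. Pr \<alpha> E V x * G x)"
    proof -
      have "(\<Sum>x\<in>S. Pr \<alpha> E V x * (f x * ?ind x))
          = (\<Sum>A\<in>Q ` S. \<Sum>x\<in>{x. x \<in> S \<and> Q x = A}. Pr \<alpha> E V x * (f x * ?ind x))"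
        by (rule sum.image_gen[OF finS])
      also have "\<dots> = (\<Sum>A\<in>Q ` S. \<Sum>x\<in>{x. x \<in> S \<and> Q x = A}. Pr \<alpha> E V x * G x)"
      proof (rule sum.cong[OF refl])
        fix A assume "A \<in> Q ` S"
        then have AV: "A \<subseteq> V" using SP assms(2) unfolding admissible_def by auto
        have SA_eq: "{x. x \<in> S \<and> Q x = A} = S \<inter> {\<pi> \<in> ?P. Q \<pi> = A}" using SP by auto
        have SA: "{x. x \<in> S \<and> Q x = A} \<in> FB E V A"
          using SQ AV unfolding SA_eq FQ_def by auto
        show "(\<Sum>x\<in>{x. x \<in> S \<and> Q x = A}. Pr \<alpha> E V x * (f x * ?ind x))
            = (\<Sum>x\<in>{x. x \<in> S \<and> Q x = A}. Pr \<alpha> E V x * G x)"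
        proof (cases "A \<inter> B = {}")
          case True
          have "(\<Sum>x\<in>{x. x \<in> S \<and> Q x = A}. Pr \<alpha> E V x * (f x * ?ind x))
              = (\<Sum>x\<in>{x. x \<in> S \<and> Q x = A}. f x * Pr \<alpha> E V x)"
            using True by (auto intro!: sum.cong simp: indicator_def)
          also have "\<dots> = (\<Sum>x\<in>{x. x \<in> S \<and> Q x = A}.
                Ex \<alpha> E (V - A) (\<lambda>\<tau>. f (oplus_id (V - A) \<tau>)) * Pr \<alpha> E V x)"
            by (rule key[OF assms(1,2,3,4) AV True _ SA]) (use SP in auto)
          also have "\<dots> = (\<Sum>x\<in>{x. x \<in> S \<and> Q x = A}. Pr \<alpha> E V x * G x)"
            using True by (auto intro!: sum.cong simp: indicator_def G_def)
          finally show ?thesis .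
        next
          case False
          then show ?thesis by (auto intro!: sum.cong simp: indicator_def G_def)
        qed
      qed
      also have "\<dots> = (\<Sum>x\<in>S. Pr \<alpha> E V x * G x)"
        by (rule sum.image_gen[OF finS, symmetric])
      finally show ?thesis .
    qed
    then show "(\<integral>x\<in>S. f x * ?ind x \<partial>?M) = (\<integral>x\<in>S. G x \<partial>?M)"
      using setint[OF finV SP] by simp
  qed
  show ?thesis
    using AE1 AE2 unfolding comm G_def by eventually_elim auto
qed

end
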